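(* Let $M$ be a finite set of primes and let $f,g$ be real functions on the primes such that (i) $p>f(p)\geq g(p)\geq 0$ for all $p\in M$, and (ii) $p>g(p)\geq f(p)\geq 0$ for all primes $p\notin M$. Then for all $z>0$, \[L(z,g)\geq \prod_{p\in M}\frac{p-f(p)}{p-g(p)}\,L(z,f).\]
   Context: For a function $h$ on the primes with $0\le h(p)<p$ for all $p$, and $z>0$, define $L(z,h)=\sum_{q\leq z}\mu^2(q)\prod_{p\mid q}\frac{h(p)}{p-h(p)}$, where $q$ runs over positive integers and $\mu$ is the Möbius function. *)

theory Defs
  imports "HOL-Analysis.Analysis" "HOL-Computational_Algebra.Squarefree"
begin

definition mu_sq :: "nat \<Rightarrow> real" where
  "mu_sq q = (if squarefree q then 1 else 0)"

definition L :: "real \<Rightarrow> (nat \<Rightarrow> real) \<Rightarrow> real" where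
  "L z h = (\<Sum>q\<in>{q::nat. 1 \<le> q \<and> real q \<le> z}.
              mu_sq q * (\<Prod>p\<in>prime_factors q. h p / (real p - h p)))"

end

theory Submission
  imports Defs
begin

definition trm :: "(nat \<Rightarrow> real) \<Rightarrow> nat \<Rightarrow> real" where
  "trm h q = mu_sq q * (\<Prod>p\<in>prime_factors q. h p / (real p - h p))"

lemma L_trm: "L z h = (\<Sum>q\<in>{q::nat. 1 \<le> q \<and> real q \<le> z}. trm h q)"
  unfolding L_def trm_def by simp

lemma finS: "finite {q::nat. 1 \<le> q \<and> real q \<le> z \<and> P q}"
proof -
  have "{q::nat. 1 \<le> q \<and> real q \<le> z \<and> P q} \<subseteq> {..nat \<lceil>z\<rceil>}"
    by (auto, linarith)
  then show ?thesis using finite_subset by blast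
qed

lemma trm_nonneg:
  assumes "\<forall>p. prime p \<longrightarrow> 0 \<le> h p \<and> h p < real p"
  shows "trm h q \<ge> 0"
  unfolding trm_def mu_sq_def
  using assms by (auto intro!: prod_nonneg divide_nonneg_nonneg simp: less_imp_le)

lemma trm_mono:
  assumes "\<forall>p. prime p \<longrightarrow> 0 \<le> h1 p \<and> h1 p \<le> h2 p \<and> h2 p < real p"
  shows "trm h1 q \<le> trm h2 q"
proof -
  have "(\<Prod>p\<in>prime_factors q. h1 p / (real p - h1 p)) \<le> (\<Prod>p\<in>prime_factors q. h2 p / (real p - h2 p))"
  proof (rule prod_mono)
    fix p assume "p \<in> prime_factors q"
    then have "prime p" by auto
    with assms have a: "0 \<le> h1 p" "h1 p \<le> h2 p" "h2 p < real p" by auto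
    show "0 \<le> h1 p / (real p - h1 p) \<and> h1 p / (real p - h1 p) \<le> h2 p / (real p - h2 p)"
      using a by (auto simp: divide_simps) (smt (verit) mult_mono)
  qed
  then show ?thesis unfolding trm_def mu_sq_def by auto
qed

lemma trm_mult:
  assumes "prime (a::nat)" "m \<ge> 1"
  shows "trm h (a*m) = (if a dvd m then 0 else h a / (real a - h a) * trm h m)"
proof (cases "a dvd m")
  case True
  then have "a*a dvd a*m" by auto
  then have "\<not> squarefree (a*m)" using assms(1)
    unfolding squarefree_def power2_eq_square by (metis not_prime_unit)
  then show ?thesis using True by (simp add: trm_def mu_sq_def)
next
  case False
  have cop: "coprime a m" using False assms(1) by (simp add: prime_imp_coprime)
  have sq: "squarefree (a*m) \<longleftrightarrow> squarefree m"
    using squarefree_multD squarefree_mult_coprime[OF cop] assms(1)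
    by (metis squarefree_prime)
  have pf: "prime_factors (a*m) = insert a (prime_factors m)"
    using prime_factors_product[of a m] assms prime_prime_factors[OF assms(1)] by auto
  have na: "a \<notin> prime_factors m" using False by auto
  show ?thesis using False unfolding trm_def mu_sq_def sq pf
    by (simp add: prod.insert[OF _ na])
qed

lemma L_split:
  assumes "prime (a::nat)"
  shows "L z h = (\<Sum>q\<in>{q. 1 \<le> q \<and> real q \<le> z \<and> \<not> a dvd q}. trm h q)
     + h a / (real a - h a) * (\<Sum>m\<in>{m. 1 \<le> m \<and> real (a*m) \<le> z \<and> \<not> a dvd m}. trm h m)"
proof -
  let ?S = "{q::nat. 1 \<le> q \<and> real q \<le> z}"
  let ?S1 = "{q. 1 \<le> q \<and> real q \<le> z \<and> \<not> a dvd q}"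
  let ?S2 = "{q. 1 \<le> q \<and> real q \<le> z \<and> a dvd q}"
  let ?T = "{m. 1 \<le> m \<and> real (a*m) \<le> z}"
  have a1: "a \<ge> 1" using assms prime_ge_1_nat by blast
  have "?S = ?S1 \<union> ?S2" by auto
  moreover have "?S1 \<inter> ?S2 = {}" by auto
  ultimately have "L z h = sum (trm h) ?S1 + sum (trm h) ?S2"
    unfolding L_trm using finS[of z "\<lambda>q. \<not> a dvd q"] finS[of z "\<lambda>q. a dvd q"]
    by (simp add: sum.union_disjoint)
  moreover have "?S2 = (\<lambda>m. a*m) ` ?T"
  proof
    show "?S2 \<subseteq> (\<lambda>m. a*m) ` ?T"
    proof
      fix q assume "q \<in> ?S2"
      then obtain m where "q = a*m" "1 \<le> q" "real q \<le> z" by auto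
      then show "q \<in> (\<lambda>m. a*m) ` ?T" by (auto intro!: image_eqI[of _ _ m])
    qed
    show "(\<lambda>m. a*m) ` ?T \<subseteq> ?S2" using a1 by auto
  qed
  moreover have "inj_on (\<lambda>m. a*m) ?T" using a1 by (auto simp: inj_on_def)
  ultimately have "L z h = sum (trm h) ?S1 + (\<Sum>m\<in>?T. trm h (a*m))"
    by (simp add: sum.reindex)
  also have "(\<Sum>m\<in>?T. trm h (a*m)) = (\<Sum>m\<in>?T. if \<not> a dvd m then h a / (real a - h a) * trm h m else 0)"
    by (rule sum.cong) (auto simp: trm_mult[OF assms])
  also have "\<dots> = (\<Sum>m\<in>{m\<in>?T. \<not> a dvd m}. h a / (real a - h a) * trm h m)"
  proof -
    have "finite ?T"
      by (rule finite_subset[OF _ finS[of z "\<lambda>_. True"]]) (use a1 in \<open>auto intro: order_trans[rotated]\<close>)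
    then show ?thesis unfolding sum.inter_filter[OF \<open>finite ?T\<close>] by simp
  qed
  also have "{m\<in>?T. \<not> a dvd m} = {m. 1 \<le> m \<and> real (a*m) \<le> z \<and> \<not> a dvd m}" by auto
  finally show ?thesis by (simp add: sum_distrib_left)
qed

lemma trm_indep:
  assumes "\<forall>p. p \<noteq> a \<longrightarrow> h1 p = h2 p" "\<not> a dvd m"
  shows "trm h1 m = trm h2 m"
proof -
  have "a \<notin> prime_factors m" using assms(2) by auto
  then have "(\<Prod>p\<in>prime_factors m. h1 p / (real p - h1 p)) = (\<Prod>p\<in>prime_factors m. h2 p / (real p - h2 p))"
    using assms(1) by (intro prod.cong) auto
  then show ?thesis unfolding trm_def by simp
qed

lemma step:
  assumes "prime (a::nat)" "\<forall>p. p \<noteq> a \<longrightarrow> h1 p = h2 p"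
    and "\<forall>p. prime p \<longrightarrow> 0 \<le> h2 p \<and> h2 p \<le> h1 p \<and> h1 p < real p"
  shows "L z h2 \<ge> (real a - h1 a) / (real a - h2 a) * L z h1"
proof -
  define A where "A = (\<Sum>q\<in>{q. 1 \<le> q \<and> real q \<le> z \<and> \<not> a dvd q}. trm h1 q)"
  define B where "B = (\<Sum>m\<in>{m. 1 \<le> m \<and> real (a*m) \<le> z \<and> \<not> a dvd m}. trm h1 m)"
  have A2: "A = (\<Sum>q\<in>{q. 1 \<le> q \<and> real q \<le> z \<and> \<not> a dvd q}. trm h2 q)"
    unfolding A_def using trm_indep[OF assms(2)] by (intro sum.cong) auto
  have B2: "B = (\<Sum>m\<in>{m. 1 \<le> m \<and> real (a*m) \<le> z \<and> \<not> a dvd m}. trm h2 m)"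
    unfolding B_def using trm_indep[OF assms(2)] by (intro sum.cong) auto
  have L1: "L z h1 = A + h1 a / (real a - h1 a) * B" unfolding A_def B_def by (rule L_split[OF assms(1)])
  have L2: "L z h2 = A + h2 a / (real a - h2 a) * B" unfolding A2 B2 by (rule L_split[OF assms(1)])
  have a1: "a \<ge> 1" using assms(1) prime_ge_1_nat by blast
  have nn: "\<forall>p. prime p \<longrightarrow> 0 \<le> h1 p \<and> h1 p < real p"
  proof (intro allI impI)
    fix p :: nat assume "prime p"
    with assms(3) have "0 \<le> h2 p" "h2 p \<le> h1 p" "h1 p < real p" by auto
    then show "0 \<le> h1 p \<and> h1 p < real p" by linarith
  qed
  have "B \<le> A" unfolding B_def A_def
  proof (rule sum_mono2[OF finS])
    show "{m. 1 \<le> m \<and> real (a*m) \<le> z \<and> \<not> a dvd m} \<subseteq> {q. 1 \<le> q \<and> real q \<le> z \<and> \<not> a dvd q}"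
    proof
      fix m assume "m \<in> {m. 1 \<le> m \<and> real (a*m) \<le> z \<and> \<not> a dvd m}"
      moreover have "m \<le> a*m" using a1 by simp
      ultimately show "m \<in> {q. 1 \<le> q \<and> real q \<le> z \<and> \<not> a dvd q}"
        by (auto intro: order_trans[rotated] simp del: of_nat_mult)
    qed
  qed (use trm_nonneg[OF nn] in auto)
  have hs: "0 \<le> h2 a" "h2 a \<le> h1 a" "h1 a < real a" using assms(1,3) by auto
  have B0: "B \<ge> 0" unfolding B_def using trm_nonneg[OF nn] by (auto intro: sum_nonneg)
  have "(real a - h1 a) / (real a - h2 a) * L z h1 = ((real a - h1 a) * A + h1 a * B) / (real a - h2 a)"
    unfolding L1 using hs by (simp add: divide_simps)
  also have "\<dots> \<le> ((real a - h2 a) * A + h2 a * B) / (real a - h2 a)"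
  proof (rule divide_right_mono)
    have "(h1 a - h2 a) * B \<le> (h1 a - h2 a) * A" using \<open>B \<le> A\<close> hs by (intro mult_left_mono) auto
    then show "(real a - h1 a) * A + h1 a * B \<le> (real a - h2 a) * A + h2 a * B" by (simp add: algebra_simps)
  qed (use hs in auto)
  also have "\<dots> = L z h2" unfolding L2 using hs by (simp add: divide_simps)
  finally show ?thesis .
qed

lemma L_mono:
  assumes "\<forall>p. prime p \<longrightarrow> 0 \<le> h1 p \<and> h1 p \<le> h2 p \<and> h2 p < real p"
  shows "L z h1 \<le> L z h2"
  unfolding L_trm using trm_mono[OF assms] by (intro sum_mono) auto

lemma L_nonneg:
  assumes "\<forall>p. prime p \<longrightarrow> 0 \<le> h p \<and> h p < real p"
  shows "L z h \<ge> 0"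
  unfolding L_trm using trm_nonneg[OF assms] by (intro sum_nonneg) auto

lemma chain:
  assumes "finite M"
  shows "(\<forall>p\<in>M. prime p) \<Longrightarrow> (\<forall>p. prime p \<longrightarrow> 0 \<le> g p \<and> g p \<le> h p \<and> h p < real p)
    \<Longrightarrow> (\<forall>p. p \<notin> M \<longrightarrow> g p = h p)
    \<Longrightarrow> L z g \<ge> (\<Prod>p\<in>M. (real p - h p) / (real p - g p)) * L z h"
  using assms
proof (induction M arbitrary: g rule: finite_induct)
  case empty
  then have "g = h" by auto
  then show ?case by simp
next
  case (insert a M)
  define g' where "g' = (\<lambda>p. if p = a then h a else g p)"
  have IH: "L z g' \<ge> (\<Prod>p\<in>M. (real p - h p) / (real p - g' p)) * L z h"
    using insert.prems by (intro insert.IH) (auto simp: g'_def)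
  have eqp: "(\<Prod>p\<in>M. (real p - h p) / (real p - g' p)) = (\<Prod>p\<in>M. (real p - h p) / (real p - g p))"
    using insert.hyps by (intro prod.cong) (auto simp: g'_def)
  have pa: "prime a" using insert.prems by auto
  have st: "L z g \<ge> (real a - g' a) / (real a - g a) * L z g'"
    by (rule step[OF pa]) (use insert.prems in \<open>auto simp: g'_def\<close>)
  have c0: "(real a - g' a) / (real a - g a) \<ge> 0" using insert.prems pa by (auto simp: g'_def)
  have "(\<Prod>p\<in>insert a M. (real p - h p) / (real p - g p)) * L z h
      = (real a - g' a) / (real a - g a) * ((\<Prod>p\<in>M. (real p - h p) / (real p - g p)) * L z h)"
    using insert.hyps by (simp add: g'_def)
  also have "\<dots> \<le> (real a - g' a) / (real a - g a) * L z g'"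
    using IH eqp c0 by (intro mult_left_mono) auto
  also have "\<dots> \<le> L z g" by (rule st)
  finally show ?case .
qed

theorem lemma2:
  fixes M :: "nat set" and f g :: "nat \<Rightarrow> real" and z :: real
  assumes "finite M" and "\<forall>p\<in>M. prime p"
    and "\<forall>p\<in>M. real p > f p \<and> f p \<ge> g p \<and> g p \<ge> 0"
    and "\<forall>p. prime p \<and> p \<notin> M \<longrightarrow> real p > g p \<and> g p \<ge> f p \<and> f p \<ge> 0"
    and "z > 0"
  shows "L z g \<ge> (\<Prod>p\<in>M. (real p - f p) / (real p - g p)) * L z f"
proof -
  define h where "h = (\<lambda>p. if p \<in> M then f p else g p)"
  have "L z g \<ge> (\<Prod>p\<in>M. (real p - h p) / (real p - g p)) * L z h"
    by (rule chain[OF assms(1) assms(2)]) (use assms(3,4) in \<open>auto simp: h_def\<close>)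
  moreover have "(\<Prod>p\<in>M. (real p - h p) / (real p - g p)) = (\<Prod>p\<in>M. (real p - f p) / (real p - g p))"
    by (intro prod.cong) (auto simp: h_def)
  moreover have "L z f \<le> L z h"
    by (rule L_mono) (use assms(3,4) in \<open>auto simp: h_def\<close>)
  moreover have "(\<Prod>p\<in>M. (real p - f p) / (real p - g p)) \<ge> 0"
    using assms(3) by (intro prod_nonneg) auto
  ultimately show ?thesis by (smt (verit) mult_left_mono)
qed

end
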